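(* Let $R$ be an associative ring with identity and $a,b,c,d\in R$ such that $a$ has a $(b,c)$-inverse $a^{\|(b,c)}$. Let $b^{-}$ be any (fixed) inner inverse of $b$ and put $e=bb^{-}$. Then the following are equivalent: (i) $d$ has a $(b,c)$-inverse; (ii) $e\in ea^{\|(b,c)}deR\cap Rea^{\|(b,c)}de$; (iii) $a^{\|(b,c)}de+1-e$ is invertible in $R$. In this case $d^{\|(b,c)}=(a^{\|(b,c)}de+1-e)^{-1}a^{\|(b,c)}$.
   Context: For $a,b,c\in R$, $a$ is $(b,c)$-invertible if there exists $y\in R$ with $y\in (bRy)\cap(yRc)$, $yab=b$ and $cay=c$; such $y$ is unique and denoted $a^{\|(b,c)}$. An inner inverse of $b$ is an element $b^{-}$ with $bb^{-}b=b$ (it exists here since $b$ is regular whenever a $(b,c)$-inverse exists). *)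

theory Defs
  imports Main
begin

definition is_bc_inverse :: "'a::ring_1 \<Rightarrow> 'a \<Rightarrow> 'a \<Rightarrow> 'a \<Rightarrow> bool" where
  "is_bc_inverse a b c y \<longleftrightarrow>
     (\<exists>r. y = b * r * y) \<and> (\<exists>s. y = y * s * c) \<and> y * a * b = b \<and> c * a * y = c"

definition bc_invertible :: "'a::ring_1 \<Rightarrow> 'a \<Rightarrow> 'a \<Rightarrow> bool" where
  "bc_invertible a b c \<longleftrightarrow> (\<exists>y. is_bc_inverse a b c y)"

definition bc_inv :: "'a::ring_1 \<Rightarrow> 'a \<Rightarrow> 'a \<Rightarrow> 'a" where
  "bc_inv a b c = (THE y. is_bc_inverse a b c y)"

definition ring_invertible :: "'a::ring_1 \<Rightarrow> bool" where
  "ring_invertible x \<longleftrightarrow> (\<exists>z. z * x = 1 \<and> x * z = 1)"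

definition ring_inv :: "'a::ring_1 \<Rightarrow> 'a" where
  "ring_inv x = (THE z. z * x = 1 \<and> x * z = 1)"

end

theory Submission
  imports Defs
begin

lemma bc_unique:
  fixes a b c x x' :: "'a::ring_1"
  assumes "is_bc_inverse a b c x" "is_bc_inverse a b c x'"
  shows "x = x'"
proof -
  obtain r where r: "x = b * r * x" using assms(1) unfolding is_bc_inverse_def by blast
  obtain s where s: "x' = x' * s * c" using assms(2) unfolding is_bc_inverse_def by blast
  have 1: "x' * a * b = b" "c * a * x = c" using assms unfolding is_bc_inverse_def by auto
  have "x = (x' * a * b) * r * x" using r 1 by simp
  also have "\<dots> = x' * a * (b * r * x)" by (simp add: mult.assoc)
  also have "\<dots> = x' * a * x" using r by simp
  finally have A: "x = x' * a * x" .
  have "x' = x' * s * (c * a * x)" using s 1 by simp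
  also have "\<dots> = (x' * s * c) * a * x" by (simp add: mult.assoc)
  also have "\<dots> = x' * a * x" using s by simp
  finally show ?thesis using A by simp
qed

lemma bc_inv_eq:
  fixes a b c x :: "'a::ring_1"
  assumes "is_bc_inverse a b c x"
  shows "bc_inv a b c = x"
  unfolding bc_inv_def using assms bc_unique by (metis the_equality)

lemma ring_inv_eq:
  fixes u z :: "'a::ring_1"
  assumes "z * u = 1" "u * z = 1"
  shows "ring_inv u = z"
  unfolding ring_inv_def
proof (rule the_equality)
  show "z * u = 1 \<and> u * z = 1" using assms by simp
  fix z' assume h: "z' * u = 1 \<and> u * z' = 1"
  have "z' = z' * (u * z)" using assms by simp
  also have "\<dots> = (z' * u) * z" by (simp add: mult.assoc)
  finally show "z' = z" using h by simp
qed

theorem theorem3p13: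
  fixes a b c d b' e :: "'a::ring_1"
  assumes ha: "bc_invertible a b c"
    and hb': "b * b' * b = b"
    and he: "e = b * b'"
  shows "(bc_invertible d b c
            \<longleftrightarrow> ((\<exists>r. e = e * bc_inv a b c * d * e * r) \<and>
                 (\<exists>s. e = s * e * bc_inv a b c * d * e)))
       \<and> (bc_invertible d b c \<longleftrightarrow> ring_invertible (bc_inv a b c * d * e + 1 - e))
       \<and> (bc_invertible d b c \<longrightarrow>
            bc_inv d b c = ring_inv (bc_inv a b c * d * e + 1 - e) * bc_inv a b c)"
proof -
  obtain y where hy: "is_bc_inverse a b c y" using ha unfolding bc_invertible_def by blast
  have yeq: "bc_inv a b c = y" using hy by (rule bc_inv_eq)
  obtain r0 where r0: "y = b * r0 * y" using hy unfolding is_bc_inverse_def by blast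
  obtain s0 where s0: "y = y * s0 * c" using hy unfolding is_bc_inverse_def by blast
  have yab: "y * a * b = b" and cay: "c * a * y = c" using hy unfolding is_bc_inverse_def by auto
  have ee: "e * e = e" using hb' he by (metis mult.assoc)
  have eb: "e * b = b" using hb' he by simp
  have ey: "e * y = y" using r0 eb by (metis mult.assoc)
  have yae: "y * a * e = e" using yab he by (metis mult.assoc)
  define u where "u = y * d * e + 1 - e"
  define w where "w = y * d * e"
  have we: "w * e = w" unfolding w_def using ee by (simp add: mult.assoc)
  have ew: "e * w = w" unfolding w_def using ey by (metis mult.assoc)
  have eu: "e * u = w" unfolding u_def w_def using ey ee by (simp add: algebra_simps flip: mult.assoc)
  have ue: "u * e = w" unfolding u_def w_def using ee by (simp add: algebra_simps)
  have eyde: "e * y * d * e = w" unfolding w_def using ey by simp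
  have i_iii: "ring_invertible u" if hd: "bc_invertible d b c"
  proof -
    obtain x where hx: "is_bc_inverse d b c x" using hd unfolding bc_invertible_def by blast
    obtain r1 where r1: "x = b * r1 * x" using hx unfolding is_bc_inverse_def by blast
    obtain s1 where s1: "x = x * s1 * c" using hx unfolding is_bc_inverse_def by blast
    have xdb: "x * d * b = b" and cdx: "c * d * x = c" using hx unfolding is_bc_inverse_def by auto
    have ex: "e * x = x" using r1 eb by (metis mult.assoc)
    have ydx: "y * d * x = y" using s0 cdx by (metis mult.assoc)
    have xay: "x * a * y = x" using s1 cay by (metis mult.assoc)
    have xde: "x * d * e = e" using xdb he by (metis mult.assoc)
    define v where "v = x * a * e + 1 - e"
    have "u * v = 1"
    proof -
      have "u * v = y * d * e * x * a * e + y * d * e * (1 - e) + (1 - e) * x * a * e + (1 - e) * (1 - e)"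
        unfolding u_def v_def by (simp add: algebra_simps)
      also have "\<dots> = 1" using ee ex ydx yae
        by (simp add: algebra_simps mult.assoc)
      finally show ?thesis .
    qed
    moreover have "v * u = 1"
    proof -
      have "v * u = x * a * e * y * d * e + x * a * e * (1 - e) + (1 - e) * y * d * e + (1 - e) * (1 - e)"
        unfolding u_def v_def by (simp add: algebra_simps)
      also have "\<dots> = 1" using ee ey xay xde
        by (simp add: algebra_simps mult.assoc)
      finally show ?thesis .
    qed
    ultimately show ?thesis unfolding ring_invertible_def by blast
  qed
  have iii_i: "is_bc_inverse d b c (ring_inv u * y)" if hu: "ring_invertible u"
  proof -
    obtain z where zu: "z * u = 1" and uz: "u * z = 1" using hu unfolding ring_invertible_def by blast
    have rz: "ring_inv u = z" using zu uz by (rule ring_inv_eq)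
    have ze: "z * e = e * z"
    proof -
      have "z * e = z * e * (u * z)" using uz by simp
      also have "\<dots> = z * (e * u) * z" by (simp add: mult.assoc)
      also have "\<dots> = z * (u * e) * z" using eu ue by simp
      also have "\<dots> = (z * u) * e * z" by (simp add: mult.assoc)
      finally show ?thesis using zu by simp
    qed
    define x where "x = z * y"
    have ex: "e * x = x" unfolding x_def using ze ey by (metis mult.assoc)
    have A: "x = b * b' * x" using ex he by simp
    have B: "x = x * s0 * c" unfolding x_def using s0 by (metis mult.assoc)
    have C: "x * d * b = b"
    proof -
      have "x * d * b = z * (y * d * e) * b" unfolding x_def using eb by (simp add: mult.assoc)
      also have "\<dots> = z * (u * e) * b" using ue w_def by simp
      also have "\<dots> = (z * u) * (e * b)" by (simp add: mult.assoc)
      finally show ?thesis using zu eb by simp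
    qed
    have D: "c * d * x = c"
    proof -
      have cau: "c * a * u = c * d * e + c * a * (1 - e)"
        unfolding u_def using cay by (simp add: algebra_simps flip: mult.assoc)
      have "c = c * a * (u * z) * y" using cay uz by simp
      also have "\<dots> = (c * a * u) * z * y" by (simp add: mult.assoc)
      also have "\<dots> = c * d * (e * x) + c * a * ((1 - e) * z * y)"
        unfolding cau x_def by (simp add: algebra_simps)
      also have "(1 - e) * z * y = z * ((1 - e) * y)" using ze by (simp add: algebra_simps flip: mult.assoc)
      also have "(1 - e) * y = 0" using ey by (simp add: algebra_simps)
      finally show ?thesis using ex by simp
    qed
    show ?thesis unfolding is_bc_inverse_def rz x_def[symmetric] using A B C D by blast
  qed
  have ii_iii: "((\<exists>r. e = e * y * d * e * r) \<and> (\<exists>s. e = s * e * y * d * e)) \<longleftrightarrow> ring_invertible u"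
  proof
    assume "(\<exists>r. e = e * y * d * e * r) \<and> (\<exists>s. e = s * e * y * d * e)"
    then obtain r s where r: "e = w * r" and s: "e = s * w" using eyde by (metis mult.assoc)
    define v where "v = e * r * e + 1 - e"
    define v' where "v' = e * s * e + 1 - e"
    have uw: "u = w + (1 - e)" unfolding u_def w_def by simp
    have w1e: "w * (1 - e) = 0" using we by (simp add: algebra_simps)
    have e1e: "(1 - e) * e = 0" "e * (1 - e) = 0" using ee by (simp_all add: algebra_simps)
    have ee1: "(1 - e) * (1 - e) = 1 - e" using ee by (simp add: algebra_simps)
    have ew1: "(1 - e) * w = 0" using ew by (simp add: algebra_simps)
    have "u * v = 1"
    proof -
      have "u * v = (w * e) * r * e + w * (1 - e) + ((1 - e) * e) * r * e + (1 - e) * (1 - e)"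
        unfolding uw v_def by (simp add: algebra_simps)
      also have "\<dots> = (w * r) * e + (1 - e)" using we w1e e1e ee1 by simp
      also have "\<dots> = 1" using r[symmetric] ee by simp
      finally show ?thesis .
    qed
    moreover have "v' * u = 1"
    proof -
      have "v' * u = e * s * (e * w) + e * s * (e * (1 - e)) + (1 - e) * w + (1 - e) * (1 - e)"
        unfolding uw v'_def by (simp add: algebra_simps)
      also have "\<dots> = e * (s * w) + (1 - e)" using ew e1e ew1 ee1 by (simp add: mult.assoc)
      also have "\<dots> = 1" using s[symmetric] ee by simp
      finally show ?thesis .
    qed
    moreover have "v' = v"
    proof -
      have "v' = v' * (u * v)" using \<open>u * v = 1\<close> by simp
      also have "\<dots> = (v' * u) * v" by (simp add: mult.assoc)
      finally show ?thesis using \<open>v' * u = 1\<close> by simp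
    qed
    ultimately show "ring_invertible u" unfolding ring_invertible_def by metis
  next
    assume "ring_invertible u"
    then obtain z where zu: "z * u = 1" and uz: "u * z = 1" unfolding ring_invertible_def by blast
    have "e = e * y * d * e * z"
    proof -
      have "e = e * (u * z)" using uz by simp
      also have "\<dots> = (e * u) * z" by (simp add: mult.assoc)
      finally show ?thesis using eu eyde by simp
    qed
    moreover have "e = z * e * y * d * e"
    proof -
      have "e = (z * u) * e" using zu by simp
      also have "\<dots> = z * (u * e)" by (simp add: mult.assoc)
      finally show ?thesis using ue eyde by (simp add: mult.assoc)
    qed
    ultimately show "(\<exists>r. e = e * y * d * e * r) \<and> (\<exists>s. e = s * e * y * d * e)" by blast
  qed
  have bc_iff: "bc_invertible d b c \<longleftrightarrow> ring_invertible u"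
    using i_iii iii_i unfolding bc_invertible_def by blast
  have formula: "bc_inv d b c = ring_inv u * y" if "bc_invertible d b c"
    using bc_inv_eq iii_i i_iii that by blast
  show ?thesis unfolding yeq u_def[symmetric] using bc_iff ii_iii formula by blast
qed

end
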